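(* Let $n\ge 2$ be an integer and let $\mathcal{P}(\lambda)=(8n^3-12n^2+2n+1)\lambda^4+(-64n^6+192n^5-192n^4+64n^3+4n^2+2n-4)\lambda^3+(-96n^5+224n^4-168n^3+52n^2-18n+6)\lambda^2+(32n^5-112n^4+128n^3-68n^2+22n-4)\lambda+16n^4-32n^3+24n^2-8n+1.$ Then $\mathcal{P}(\lambda)$ has a unique root larger than $(2n-1)^2$, and all other roots of $\mathcal{P}$ are less than $1$. *)

theory Defs
  imports Complex_Main
begin

definition calP :: "nat \<Rightarrow> real \<Rightarrow> real" where
  "calP n x =
     (8*real n^3 - 12*real n^2 + 2*real n + 1) * x^4
   + (-64*real n^6 + 192*real n^5 - 192*real n^4 + 64*real n^3 + 4*real n^2 + 2*real n - 4) * x^3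
   + (-96*real n^5 + 224*real n^4 - 168*real n^3 + 52*real n^2 - 18*real n + 6) * x^2
   + (32*real n^5 - 112*real n^4 + 128*real n^3 - 68*real n^2 + 22*real n - 4) * x
   + (16*real n^4 - 32*real n^3 + 24*real n^2 - 8*real n + 1)"

end

theory Submission
  imports Defs
begin

theorem lemma2p1:
  fixes n :: nat
  assumes "n \<ge> 2"
  shows "(\<exists>!x::real. x > (2*real n - 1)^2 \<and> calP n x = 0)
       \<and> (\<forall>x::real. calP n x = 0 \<and> \<not> x > (2*real n - 1)^2 \<longrightarrow> x < 1)"
proof -
  define m where "m = real n"
  define t where "t = m - 2"
  have t0: "t \<ge> 0" using assms unfolding t_def m_def by simp
  have mt: "m = t + 2" unfolding t_def by simp
  define a4 where "a4 = 8*m^3 - 12*m^2 + 2*m + 1"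
  define a3 where "a3 = -64*m^6 + 192*m^5 - 192*m^4 + 64*m^3 + 4*m^2 + 2*m - 4"
  define a2 where "a2 = -96*m^5 + 224*m^4 - 168*m^3 + 52*m^2 - 18*m + 6"
  define a1 where "a1 = 32*m^5 - 112*m^4 + 128*m^3 - 68*m^2 + 22*m - 4"
  define a0 where "a0 = 16*m^4 - 32*m^3 + 24*m^2 - 8*m + (1::real)"
  define K where "K = (2*m - 1)^2"
  define X where "X = 8*m^3"
  have P: "calP n x = a4*x^4 + a3*x^3 + a2*x^2 + a1*x + a0" for x
    unfolding calP_def a4_def a3_def a2_def a1_def a0_def m_def by simp
  have tp: "t^k \<ge> 0" for k using t0 by simp
  have "a4 = 21 + 50*t + 36*t^2 + 8*t^3" unfolding a4_def mt by algebra
  hence A4: "a4 > 0" using tp[of 2] tp[of 3] t0 by linarith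
  have "-a2 = 654 + 2338*t + 3260*t^2 + 2216*t^3 + 736*t^4 + 96*t^5" unfolding a2_def mt by algebra
  hence A2: "a2 < 0" using tp[of 2] tp[of 3] tp[of 4] tp[of 5] t0 by linarith
  have "a1 = 24 + 262*t + 572*t^2 + 512*t^3 + 208*t^4 + 32*t^5" unfolding a1_def mt by algebra
  hence A1: "a1 > 0" using tp[of 2] tp[of 3] tp[of 4] tp[of 5] t0 by linarith
  have "a0 = 81 + 216*t + 216*t^2 + 96*t^3 + 16*t^4" unfolding a0_def mt by algebra
  hence A0: "a0 > 0" using tp[of 2] tp[of 3] tp[of 4] t0 by linarith
  have "-(a4*K + a3 + a1 + a0) = 202 + 1106*t + 2424*t^2 + 2720*t^3 + 1648*t^4 + 512*t^5 + 64*t^6"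
    unfolding a4_def a3_def a1_def a0_def K_def mt by algebra
  hence I2: "a4*K + a3 + a1 + a0 < 0" using tp[of 2] tp[of 3] tp[of 4] tp[of 5] tp[of 6] t0 by linarith
  have "X*(a4*X+a3)+a2 = 53618 + 266590*t + 567812*t^2 + 679096*t^3 + 500080*t^4 + 232640*t^5
      + 66880*t^6 + 10880*t^7 + 768*t^8"
    unfolding a4_def a3_def a2_def X_def mt by algebra
  hence I3: "X*(a4*X+a3)+a2 > 0" using tp[of 2] tp[of 3] tp[of 4] tp[of 5] tp[of 6] tp[of 7] tp[of 8] t0 by linarith
  have "a4*K^3 - 2*a1 - 3*a0 = 15018 + 96514*t + 272312*t^2 + 443216*t^3 + 459184*t^4 + 314432*t^5
      + 142464*t^6 + 41216*t^7 + 6912*t^8 + 512*t^9"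
    unfolding a4_def a1_def a0_def K_def mt by algebra
  hence I4: "a4*K^3 - 2*a1 - 3*a0 > 0" using tp[of 2] tp[of 3] tp[of 4] tp[of 5] tp[of 6] tp[of 7] tp[of 8] tp[of 9] t0 by linarith
  have "K = 9 + 12*t + 4*t^2" unfolding K_def mt by algebra
  hence K9: "K \<ge> 9" using tp[of 2] t0 by linarith
  have "X - K = 55 + 84*t + 44*t^2 + 8*t^3" unfolding K_def X_def mt by algebra
  hence XK: "X > K" using tp[of 2] tp[of 3] t0 by linarith
  have neg: "calP n x < 0" if x1: "1 \<le> x" and xK: "x \<le> K" for x
  proof -
    have x3: "x^3 > 0" using x1 by simp
    have "x^3*(a4*K+a3+a1+a0) < 0" using x3 I2 by (rule mult_pos_neg)
    hence e1: "a4*K*x^3 + a3*x^3 + a1*x^3 + a0*x^3 < 0" by (simp add: algebra_simps)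
    have "a4*x^4 = (a4*x^3)*x" by (simp add: power_numeral_reduce)
    also have "\<dots> \<le> (a4*x^3)*K" using xK A4 x3 by (intro mult_left_mono) auto
    finally have e2: "a4*x^4 \<le> a4*K*x^3" by (simp add: algebra_simps)
    have e3: "a2*x^2 \<le> 0" using A2 by (simp add: mult_nonpos_nonneg)
    have "x \<le> x^3" using x1 by (metis le_add_diff_inverse2 less_one not_le power_increasing power_one_right numeral_le_iff semiring_norm(70) zero_less_numeral one_le_numeral)
    hence e4: "a1*x \<le> a1*x^3" using A1 by simp
    have "1 \<le> x^3" using x1 by simp
    hence e5: "a0 \<le> a0*x^3" using A0 by simp
    show ?thesis unfolding P using e1 e2 e3 e4 e5 by linarith
  qed
  have PK: "calP n K < 0" using neg K9 by simp
  have PX: "calP n X > 0"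
  proof -
    have X0: "X > 0" using XK K9 by linarith
    have "calP n X = X^2*(X*(a4*X+a3)+a2) + a1*X + a0" unfolding P by algebra
    moreover have "X^2*(X*(a4*X+a3)+a2) > 0" using X0 I3 by simp
    moreover have "a1*X > 0" using A1 X0 by simp
    ultimately show ?thesis using A0 by linarith
  qed
  have cont: "isCont (calP n) x" for x unfolding calP_def by (intro continuous_intros)
  obtain r where r: "r \<ge> K" "r \<le> X" "calP n r = 0"
    using IVT[of "calP n" K 0 X] PK PX XK cont by force
  have rK: "r > K" using r PK by (metis less_eq_real_def less_irrefl)
  define g where "g z = a4*z + a3 + a2/z + a1/z^2 + a0/z^3" for z
  define D where "D z = a4 - a2/z^2 - 2*a1/z^3 - 3*a0/z^4" for z
  have gP: "calP n z = z^3 * g z" if "z \<noteq> 0" for z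
    unfolding P g_def using that by (simp add: field_simps power_numeral_reduce)
  have gD: "(g has_real_derivative D z) (at z)" if "z \<noteq> 0" for z
    unfolding g_def D_def using that
    by (auto intro!: derivative_eq_intros simp: field_simps power_numeral_reduce)
  have Dpos: "D z > 0" if zK: "z \<ge> K" for z
  proof -
    have z0: "z > 0" using zK K9 by linarith
    have "D z * z^4 = a4*z^4 - a2*z^2 - 2*a1*z - 3*a0"
      unfolding D_def using z0 by (simp add: field_simps power_numeral_reduce)
    moreover have "a4*z^4 - a2*z^2 - 2*a1*z - 3*a0 > 0"
    proof -
      have "K^3 \<le> z^3" using zK K9 by (intro power_mono) auto
      hence "a4*K^3*z \<le> a4*z^3*z" using A4 z0 by (intro mult_right_mono) auto
      hence f1: "a4*K^3*z \<le> a4*z^4" by (simp add: power_numeral_reduce algebra_simps)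
      have f2: "a2*z^2 < 0" using A2 z0 by (simp add: mult_neg_pos)
      have f3: "3*a0 \<le> 3*a0*z" using A0 zK K9 by simp
      have f4: "z*(a4*K^3 - 2*a1 - 3*a0) > 0" using z0 I4 by simp
      show ?thesis using f1 f2 f3 f4 by (simp add: algebra_simps)
    qed
    ultimately have "D z * z^4 > 0" by simp
    thus ?thesis using z0 by (simp add: zero_less_mult_iff)
  qed
  have mono: "g a < g b" if "K \<le> a" "a < b" for a b
  proof (rule DERIV_pos_imp_increasing[OF that(2)])
    fix z assume "a \<le> z" "z \<le> b"
    hence zK: "z \<ge> K" using that by linarith
    hence "z \<noteq> 0" using K9 by linarith
    thus "\<exists>y. (g has_real_derivative y) (at z) \<and> 0 < y" using gD Dpos zK by blast
  qed
  have groot: "g z = 0" if "z > K" "calP n z = 0" for z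
  proof -
    have "z \<noteq> 0" using that K9 by linarith
    thus ?thesis using gP[of z] that by simp
  qed
  have uniq: "y = r" if "y > K" "calP n y = 0" for y
  proof (rule ccontr)
    assume "y \<noteq> r"
    hence "y < r \<or> r < y" by linarith
    thus False using mono[of y r] mono[of r y] groot[of y] groot[of r] that rK r(3) by force
  qed
  have part1: "\<exists>!x::real. x > K \<and> calP n x = 0"
    using rK r(3) uniq by blast
  have part2: "\<forall>x::real. calP n x = 0 \<and> \<not> x > K \<longrightarrow> x < 1"
    using neg by (metis less_irrefl not_le)
  show ?thesis using part1 part2 unfolding K_def m_def by blast
qed

end
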